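(* (Euler's Formula for Resistance Function I.) Let $\Gamma$ be a metrized graph whose edges are $e_1,\dots,e_m$, where $e_i$ has end points $p_i,q_i$ and length $L_i$. For $s,t\in V(\Gamma)$ let $B=\{e_i\in E(\Gamma): s \text{ and } t \text{ are disconnected in } \Gamma-e_i\}$. Then $$r(s,t)=\sum_{e_i\in B}L_i+\sum_{\substack{e_i\in E(\Gamma)\\ e_i \text{ not a bridge}}}\frac{L_i}{(L_i+R_i)^2}\big(j^{\Gamma-e_i}_{p_i}(q_i,s)-j^{\Gamma-e_i}_{p_i}(q_i,t)\big)^2=\sum_{e_i\in B}L_i+\sum_{\substack{e_i\in E(\Gamma)\\ e_i \text{ not a bridge}}}\frac{1}{L_i}\big(j_{p_i}(q_i,s)-j_{p_i}(q_i,t)\big)^2.$$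
   Context: A metrized graph $\Gamma$ is a finite connected graph (multiple edges and self-loops allowed) in which each edge is identified with a closed line segment of positive length; $V(\Gamma)$ is a chosen finite vertex set and $E(\Gamma)$ the resulting edge set. $\Gamma$ is regarded as a resistive electric circuit in which each edge is a resistor whose resistance equals its length. $r(x,y)$ is the effective resistance between $x$ and $y$; $j_z(x,y)$ is the voltage at $x$ when a unit current enters at $y$ and exits at $z$, with reference voltage $0$ at $z$. $\Gamma-e_i$ is obtained by deleting the interior of $e_i$; $e_i$ is a bridge if $\Gamma-e_i$ is disconnected; for non-bridge $e_i$, $R_i:=r_{\Gamma-e_i}(p_i,q_i)$, and $j^{\Gamma-e_i}$ is the voltage function of $\Gamma-e_i$. *)

theory Defs
  imports Complex_Main
begin

text \<open>A metrized graph with vertex set V, edge set E (edges are abstract labels, so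
multiple edges and self-loops are allowed), endpoint maps p q and edge lengths L.
All quantities in the theorem are evaluated at vertices, so the electric circuit is
the finite resistive network on V with resistance L e on edge e.\<close>

definition adj :: "'e set \<Rightarrow> ('e \<Rightarrow> 'v) \<Rightarrow> ('e \<Rightarrow> 'v) \<Rightarrow> ('v \<times> 'v) set" where
  "adj E p q = {(p e, q e) | e. e \<in> E} \<union> {(q e, p e) | e. e \<in> E}"

definition connected_in :: "'e set \<Rightarrow> ('e \<Rightarrow> 'v) \<Rightarrow> ('e \<Rightarrow> 'v) \<Rightarrow> 'v \<Rightarrow> 'v \<Rightarrow> bool" where
  "connected_in E p q u v \<longleftrightarrow> (u, v) \<in> (adj E p q)\<^sup>*"

definition graph_connected :: "'v set \<Rightarrow> 'e set \<Rightarrow> ('e \<Rightarrow> 'v) \<Rightarrow> ('e \<Rightarrow> 'v) \<Rightarrow> bool" where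
  "graph_connected V E p q \<longleftrightarrow> V \<noteq> {} \<and> (\<forall>u\<in>V. \<forall>v\<in>V. connected_in E p q u v)"

definition metrized_graph ::
  "'v set \<Rightarrow> 'e set \<Rightarrow> ('e \<Rightarrow> 'v) \<Rightarrow> ('e \<Rightarrow> 'v) \<Rightarrow> ('e \<Rightarrow> real) \<Rightarrow> bool" where
  "metrized_graph V E p q L \<longleftrightarrow> finite V \<and> finite E \<and>
     (\<forall>e\<in>E. p e \<in> V \<and> q e \<in> V \<and> L e > 0) \<and> graph_connected V E p q"

definition is_bridge :: "'v set \<Rightarrow> 'e set \<Rightarrow> ('e \<Rightarrow> 'v) \<Rightarrow> ('e \<Rightarrow> 'v) \<Rightarrow> 'e \<Rightarrow> bool" where
  "is_bridge V E p q e \<longleftrightarrow> \<not> graph_connected V (E - {e}) p q"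

text \<open>Net current flowing out of vertex v into the network for the potential f
(Ohm's law on each edge; self-loops carry no current).\<close>
definition net_current ::
  "'e set \<Rightarrow> ('e \<Rightarrow> 'v) \<Rightarrow> ('e \<Rightarrow> 'v) \<Rightarrow> ('e \<Rightarrow> real) \<Rightarrow> ('v \<Rightarrow> real) \<Rightarrow> 'v \<Rightarrow> real" where
  "net_current E p q L f v =
     (\<Sum>e\<in>{e\<in>E. p e = v}. (f v - f (q e)) / L e) +
     (\<Sum>e\<in>{e\<in>E. q e = v}. (f v - f (p e)) / L e)"

text \<open>f is the voltage when a unit current enters at y and exits at z, with
reference voltage 0 at z (and f vanishes off V, to make it unique).\<close>
definition is_voltage ::
  "'v set \<Rightarrow> 'e set \<Rightarrow> ('e \<Rightarrow> 'v) \<Rightarrow> ('e \<Rightarrow> 'v) \<Rightarrow> ('e \<Rightarrow> real) \<Rightarrow> 'v \<Rightarrow> 'v \<Rightarrow> ('v \<Rightarrow> real) \<Rightarrow> bool" where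
  "is_voltage V E p q L z y f \<longleftrightarrow>
     (\<forall>v. v \<notin> V \<longrightarrow> f v = 0) \<and> f z = 0 \<and>
     (\<forall>v\<in>V. net_current E p q L f v = (if v = y then 1 else 0) - (if v = z then 1 else 0))"

text \<open>j_z(x,y): voltage at x, unit current entering at y and exiting at z.\<close>
definition jfun ::
  "'v set \<Rightarrow> 'e set \<Rightarrow> ('e \<Rightarrow> 'v) \<Rightarrow> ('e \<Rightarrow> 'v) \<Rightarrow> ('e \<Rightarrow> real) \<Rightarrow> 'v \<Rightarrow> 'v \<Rightarrow> 'v \<Rightarrow> real" where
  "jfun V E p q L z x y = (THE f. is_voltage V E p q L z y f) x"

definition resistance ::
  "'v set \<Rightarrow> 'e set \<Rightarrow> ('e \<Rightarrow> 'v) \<Rightarrow> ('e \<Rightarrow> 'v) \<Rightarrow> ('e \<Rightarrow> real) \<Rightarrow> 'v \<Rightarrow> 'v \<Rightarrow> real" where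
  "resistance V E p q L x y = jfun V E p q L y x x"

end

theory Submission
  imports Defs "HOL-Library.Function_Algebras"
begin


lemma sum_fun_app: "(sum h A) x = (\<Sum>a\<in>A. h a x)"
  by (induct A rule: infinite_finite_induct) auto

interpretation fvs: vector_space "\<lambda>(c::real) (f::'a \<Rightarrow> real) x. c * f x"
  by unfold_locales (auto simp: algebra_simps fun_eq_iff)

lemma fin_surj:
  fixes T :: "('v \<Rightarrow> real) \<Rightarrow> ('v \<Rightarrow> real)" and V :: "'v set"
  assumes finV: "finite V"
    and add: "\<And>f g. T (f + g) = T f + T g"
    and scl: "\<And>c f. T (\<lambda>x. c * f x) = (\<lambda>x. c * T f x)"
    and into: "\<And>f x. x \<notin> V \<Longrightarrow> T f x = 0"
    and ker: "\<And>f. (\<forall>x. x \<notin> V \<longrightarrow> f x = 0) \<Longrightarrow> T f = 0 \<Longrightarrow> f = 0"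
    and g: "\<forall>x. x \<notin> V \<longrightarrow> g x = 0"
  shows "\<exists>f. (\<forall>x. x \<notin> V \<longrightarrow> f x = 0) \<and> T f = g"
proof -
  define S where "S = {f::'v\<Rightarrow>real. \<forall>x. x \<notin> V \<longrightarrow> f x = 0}"
  define \<delta> where "\<delta> v = (\<lambda>x::'v. if x = v then (1::real) else 0)" for v
  define B where "B = \<delta> ` V"
  define A where "A = T ` B"
  have T0: "T 0 = 0"
    using scl[of 0 0] by (simp add: fun_eq_iff zero_fun_def)
  have T0': "T (\<lambda>a. 0) = (\<lambda>a. 0)" using T0 by (simp add: zero_fun_def)
  have Tdiff: "T (f - g) = T f - T g" for f g
  proof -
    have "T (f - g) + T g = T f" using add[of "f - g" g] by simp
    then show ?thesis by (simp add: algebra_simps)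
  qed
  have Tsum: "T (sum h F) = (\<Sum>a\<in>F. T (h a))" for h and F :: "'b set"
  proof (induct F rule: infinite_finite_induct)
    case (infinite A) then show ?case using T0' by simp
  next
    case empty then show ?case using T0' by simp
  next
    case (insert x F)
    have "T (sum h (insert x F)) = T (h x + sum h F)" using insert(1,2) by (metis sum.insert)
    also have "\<dots> = T (h x) + T (sum h F)" by (rule add)
    finally show ?case using insert by (metis sum.insert)
  qed
  have SB: "S \<subseteq> fvs.span B"
  proof
    fix f assume "f \<in> S"
    then have "f = (\<Sum>v\<in>V. (\<lambda>x. f v * \<delta> v x))"
      using finV by (auto simp: fun_eq_iff sum_fun_app S_def \<delta>_def if_distrib[where f="\<lambda>u. _ * u"] sum.delta cong: if_cong)
    moreover have "(\<Sum>v\<in>V. (\<lambda>x. f v * \<delta> v x)) \<in> fvs.span B"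
      by (intro fvs.span_sum fvs.span_scale fvs.span_base) (auto simp: B_def)
    ultimately show "f \<in> fvs.span B" by simp
  qed
  have dS: "\<delta> v \<in> S" if "v \<in> V" for v using that by (auto simp: S_def \<delta>_def)
  have inj: "inj_on (\<lambda>v. T (\<delta> v)) V"
  proof (rule inj_onI)
    fix v w assume v: "v \<in> V" and w: "w \<in> V" and eq: "T (\<delta> v) = T (\<delta> w)"
    have "T (\<delta> v - \<delta> w) = 0" using eq by (simp add: Tdiff)
    moreover have "\<forall>x. x \<notin> V \<longrightarrow> (\<delta> v - \<delta> w) x = 0" using v w by (auto simp: \<delta>_def)
    ultimately have "\<delta> v - \<delta> w = 0" using ker by blast
    then have "(\<delta> v - \<delta> w) v = 0" by simp
    then show "v = w" by (auto simp: \<delta>_def split: if_splits)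
  qed
  have A_eq: "A = (\<lambda>v. T (\<delta> v)) ` V" by (auto simp: A_def B_def)
  have cardA: "card A = card V" using A_eq card_image[OF inj] by simp
  have finA: "finite A" using A_eq finV by simp
  have finB: "finite B" using B_def finV by simp
  have cardB: "card B \<le> card V" using B_def finV card_image_le by blast
  have indA: "fvs.independent A"
  proof (rule fvs.independent_if_scalars_zero[OF finA])
    fix c and a assume sum0: "(\<Sum>x\<in>A. (\<lambda>y. c x * x y)) = 0" and aA: "a \<in> A"
    define h where "h = (\<Sum>v\<in>V. (\<lambda>y. c (T (\<delta> v)) * \<delta> v y))"
    have "T h = (\<Sum>v\<in>V. (\<lambda>y. c (T (\<delta> v)) * T (\<delta> v) y))"
      unfolding h_def Tsum scl ..
    also have "\<dots> = (\<Sum>x\<in>A. (\<lambda>y. c x * x y))"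
      unfolding A_eq by (rule sum.reindex[OF inj, symmetric, unfolded comp_def])
    finally have Th: "T h = 0" using sum0 by simp
    have "\<forall>x. x \<notin> V \<longrightarrow> h x = 0"
      by (auto simp: h_def sum_fun_app \<delta>_def intro!: sum.neutral)
    then have h0: "h = 0" using ker Th by blast
    obtain w where w: "w \<in> V" "a = T (\<delta> w)" using aA A_eq by auto
    have "h w = c (T (\<delta> w))"
      using finV w(1) by (simp add: h_def sum_fun_app \<delta>_def if_distrib[where f="\<lambda>u. _ * u"] sum.delta cong: if_cong)
    then show "c a = 0" using h0 w by simp
  qed
  have AS: "A \<subseteq> S" using into by (auto simp: A_def S_def)
  have gspan: "g \<in> fvs.span A"
  proof (rule ccontr)
    assume ng: "g \<notin> fvs.span A"
    have ind2: "fvs.independent (insert g A)" by (rule fvs.independent_insertI[OF ng indA])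
    have "insert g A \<subseteq> fvs.span B" using SB AS g by (auto simp: S_def)
    from fvs.independent_span_bound[OF finB ind2 this]
    have "card (insert g A) \<le> card B" by simp
    moreover have "g \<notin> A" using ng fvs.span_base by blast
    ultimately have "card A + 1 \<le> card V" using finA cardB by simp
    then show False using cardA by simp
  qed
  have "fvs.span A \<subseteq> T ` S"
  proof (rule fvs.span_minimal)
    show "A \<subseteq> T ` S" using dS by (auto simp: A_def B_def)
    show "fvs.subspace (T ` S)"
    proof (rule fvs.subspaceI)
      show "0 \<in> T ` S" using T0 by (auto simp: S_def intro!: image_eqI[of _ _ 0])
      show "x + y \<in> T ` S" if "x \<in> T ` S" "y \<in> T ` S" for x y
        using that by (auto simp: S_def add[symmetric] intro!: image_eqI)
      show "(\<lambda>z. c * x z) \<in> T ` S" if "x \<in> T ` S" for c x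
        using that by (auto simp: S_def scl[symmetric] intro!: image_eqI)
    qed
  qed
  then show ?thesis using gspan by (auto simp: S_def)
qed



lemma conn_refl: "connected_in F p q u u"
  by (simp add: connected_in_def)

lemma conn_trans: "connected_in F p q u v \<Longrightarrow> connected_in F p q v w \<Longrightarrow> connected_in F p q u w"
  unfolding connected_in_def by (rule rtrancl_trans)

lemma adj_sym: "(x, y) \<in> adj F p q \<Longrightarrow> (y, x) \<in> adj F p q"
  by (auto simp: adj_def)

lemma conn_sym: "connected_in F p q u v \<Longrightarrow> connected_in F p q v u"
  unfolding connected_in_def
proof (induct rule: rtrancl_induct)
  case base then show ?case by simp
next
  case (step y z)
  have "(z, y) \<in> (adj F p q)\<^sup>*" using adj_sym[OF step(2)] by blast
  then show ?case using step(3) by (rule rtrancl_trans)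
qed

lemma conn_edge: "e \<in> F \<Longrightarrow> connected_in F p q (p e) (q e)"
  unfolding connected_in_def adj_def by (rule r_into_rtrancl) blast

lemma conn_split:
  assumes "e0 \<in> E" and "connected_in E p q (p e0) u"
  shows "connected_in (E - {e0}) p q (p e0) u \<or> connected_in (E - {e0}) p q (q e0) u"
  using assms(2) unfolding connected_in_def
proof (induct rule: rtrancl_induct)
  case base then show ?case by simp
next
  case (step y z)
  from step(2) obtain e where e: "e \<in> E" "(y = p e \<and> z = q e) \<or> (y = q e \<and> z = p e)"
    by (auto simp: adj_def)
  show ?case
  proof (cases "e = e0")
    case True then show ?thesis using e by auto
  next
    case False
    then have "(y, z) \<in> adj (E - {e0}) p q" using e by (auto simp: adj_def)
    then show ?thesis using step(3) by (meson rtrancl.rtrancl_into_rtrancl)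
  qed
qed

lemma not_bridge_conn:
  assumes "graph_connected V E p q" and "\<not> is_bridge V E p q e"
  shows "graph_connected V (E - {e}) p q"
  using assms by (simp add: is_bridge_def)

lemma bridge_sep:
  assumes gc: "graph_connected V E p q" and e: "e \<in> E" and pV: "p e \<in> V"
    and br: "is_bridge V E p q e"
  shows "\<not> connected_in (E - {e}) p q (p e) (q e)"
proof
  assume pq: "connected_in (E - {e}) p q (p e) (q e)"
  have "connected_in (E - {e}) p q (p e) u" if "u \<in> V" for u
  proof -
    have "connected_in E p q (p e) u" using gc pV that by (auto simp: graph_connected_def)
    from conn_split[OF e this] show ?thesis
    proof
      assume "connected_in (E - {e}) p q (q e) u"
      from conn_trans[OF pq this] show ?thesis .
    qed
  qed
  then have "graph_connected V (E - {e}) p q"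
    using gc unfolding graph_connected_def by (meson conn_sym conn_trans)
  then show False using br by (simp add: is_bridge_def)
qed

locale rnet =
  fixes V :: "'v set" and E :: "'e set" and p q :: "'e \<Rightarrow> 'v" and L :: "'e \<Rightarrow> real"
  assumes finV: "finite V" and finE: "finite E"
    and pV: "\<And>e. e \<in> E \<Longrightarrow> p e \<in> V" and qV: "\<And>e. e \<in> E \<Longrightarrow> q e \<in> V"
    and Lpos: "\<And>e. e \<in> E \<Longrightarrow> 0 < L e"
begin

abbreviation NC where "NC f v \<equiv> net_current E p q L f v"

lemma nc_add: "NC (\<lambda>x. f x + g x) v = NC f v + NC g v"
proof -
  have t: "(f a + g a - (f b + g b)) / l = (f a - f b) / l + (g a - g b) / l" for a b and l :: real
    by (simp add: add_divide_distrib[symmetric] algebra_simps)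
  show ?thesis unfolding net_current_def t sum.distrib by simp
qed

lemma nc_scale: "NC (\<lambda>x. c * f x) v = c * NC f v"
proof -
  have t: "(c * f a - c * f b) / l = c * ((f a - f b) / l)" for a b and l :: real
    by (simp add: algebra_simps)
  show ?thesis unfolding net_current_def t sum_distrib_left[symmetric] by (simp add: algebra_simps)
qed

lemma nc_diff: "NC (\<lambda>x. f x - g x) v = NC f v - NC g v"
proof -
  have t: "(f a - g a - (f b - g b)) / l = (f a - f b) / l - (g a - g b) / l" for a b and l :: real
    by (simp add: diff_divide_distrib[symmetric] algebra_simps)
  show ?thesis unfolding net_current_def t sum_subtractf by simp
qed

lemma green:
  "(\<Sum>v\<in>V. g v * NC f v) = (\<Sum>e\<in>E. (g (p e) - g (q e)) * (f (p e) - f (q e)) / L e)"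
proof -
  have 1: "(\<Sum>v\<in>V. g v * (\<Sum>e\<in>{e\<in>E. p e = v}. (f v - f (q e)) / L e))
        = (\<Sum>e\<in>E. g (p e) * (f (p e) - f (q e)) / L e)"
  proof -
    have "(\<Sum>v\<in>V. g v * (\<Sum>e\<in>{e\<in>E. p e = v}. (f v - f (q e)) / L e))
        = (\<Sum>v\<in>V. (\<Sum>e\<in>{e\<in>E. p e = v}. g (p e) * (f (p e) - f (q e)) / L e))"
      by (auto simp: sum_distrib_left intro!: sum.cong)
    also have "\<dots> = (\<Sum>e\<in>E. g (p e) * (f (p e) - f (q e)) / L e)"
      by (rule sum.group) (use finE finV pV in auto)
    finally show ?thesis .
  qed
  have 2: "(\<Sum>v\<in>V. g v * (\<Sum>e\<in>{e\<in>E. q e = v}. (f v - f (p e)) / L e))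
        = (\<Sum>e\<in>E. g (q e) * (f (q e) - f (p e)) / L e)"
  proof -
    have "(\<Sum>v\<in>V. g v * (\<Sum>e\<in>{e\<in>E. q e = v}. (f v - f (p e)) / L e))
        = (\<Sum>v\<in>V. (\<Sum>e\<in>{e\<in>E. q e = v}. g (q e) * (f (q e) - f (p e)) / L e))"
      by (auto simp: sum_distrib_left intro!: sum.cong)
    also have "\<dots> = (\<Sum>e\<in>E. g (q e) * (f (q e) - f (p e)) / L e)"
      by (rule sum.group) (use finE finV qV in auto)
    finally show ?thesis .
  qed
  have "(\<Sum>v\<in>V. g v * NC f v) =
      (\<Sum>v\<in>V. g v * (\<Sum>e\<in>{e\<in>E. p e = v}. (f v - f (q e)) / L e)) +
      (\<Sum>v\<in>V. g v * (\<Sum>e\<in>{e\<in>E. q e = v}. (f v - f (p e)) / L e))"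
    unfolding net_current_def by (simp add: distrib_left sum.distrib)
  also have "\<dots> = (\<Sum>e\<in>E. g (p e) * (f (p e) - f (q e)) / L e + g (q e) * (f (q e) - f (p e)) / L e)"
    unfolding 1 2 sum.distrib ..
  also have "\<dots> = (\<Sum>e\<in>E. (g (p e) - g (q e)) * (f (p e) - f (q e)) / L e)"
    by (rule sum.cong) (auto simp: algebra_simps diff_divide_distrib add_divide_distrib)
  finally show ?thesis .
qed

lemma nc_sum0: "(\<Sum>v\<in>V. NC f v) = 0"
  using green[of "\<lambda>_. 1" f] by simp

lemma delta_sum:
  fixes w :: "'v \<Rightarrow> real"
  assumes "a \<in> V" "b \<in> V"
  shows "(\<Sum>v\<in>V. w v * ((if v = b then 1 else 0) - (if v = a then 1 else 0))) = w b - w a"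
proof -
  have h: "(\<Sum>v\<in>V. w v * (if v = c then 1 else 0)) = w c" if "c \<in> V" for c
  proof -
    have "(\<Sum>v\<in>V. w v * (if v = c then 1 else 0)) = (\<Sum>v\<in>V. if v = c then w v else 0)"
      by (rule sum.cong) auto
    then show ?thesis using finV that by simp
  qed
  show ?thesis using h[OF assms(1)] h[OF assms(2)]
    by (simp add: right_diff_distrib sum_subtractf)
qed

lemma edges_const:
  assumes "\<And>e. e \<in> E \<Longrightarrow> f (p e) = f (q e)" and "connected_in E p q u w"
  shows "f u = f w"
  using assms(2) unfolding connected_in_def
proof (induct rule: rtrancl_induct)
  case base then show ?case by simp
next
  case (step y z) then show ?case using assms(1) by (auto simp: adj_def)
qed

lemma energy_terms_zero:
  assumes "(\<Sum>e\<in>E. (f (p e) - f (q e)) * (f (p e) - f (q e)) / L e) = 0" and "e \<in> E"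
  shows "f (p e) = f (q e)"
proof -
  have nn: "\<forall>e\<in>E. 0 \<le> (f (p e) - f (q e)) * (f (p e) - f (q e)) / L e"
    using Lpos by (auto intro: divide_nonneg_pos)
  have "\<forall>e\<in>E. (f (p e) - f (q e)) * (f (p e) - f (q e)) / L e = 0"
  proof -
    have "(\<Sum>e\<in>E. (f (p e) - f (q e)) * (f (p e) - f (q e)) / L e) = 0 \<longleftrightarrow>
       (\<forall>e\<in>E. (f (p e) - f (q e)) * (f (p e) - f (q e)) / L e = 0)"
      using nn by (intro sum_nonneg_eq_0_iff[OF finE]) auto
    then show ?thesis using assms(1) by blast
  qed
  then have "(f (p e) - f (q e)) * (f (p e) - f (q e)) / L e = 0"
    using assms(2) by simp
  then show ?thesis using Lpos[OF assms(2)] by simp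
qed

lemma energy_nonneg: "0 \<le> (\<Sum>e\<in>E. (f (p e) - f (q e)) * (f (p e) - f (q e)) / L e)"
  using Lpos by (auto intro!: sum_nonneg divide_nonneg_pos)

lemma cut:
  assumes e0: "e0 \<in> E" and C: "\<And>e. e \<in> E - {e0} \<Longrightarrow> (p e \<in> C \<longleftrightarrow> q e \<in> C)"
  shows "(\<Sum>v\<in>V. (if v \<in> C then 1 else 0) * NC f v)
       = ((if p e0 \<in> C then 1 else 0) - (if q e0 \<in> C then 1 else 0)) * (f (p e0) - f (q e0)) / L e0"
proof -
  let ?g = "\<lambda>v. if v \<in> C then (1::real) else 0"
  have "(\<Sum>v\<in>V. ?g v * NC f v) = (\<Sum>e\<in>E. (?g (p e) - ?g (q e)) * (f (p e) - f (q e)) / L e)"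
    by (rule green)
  also have "\<dots> = (?g (p e0) - ?g (q e0)) * (f (p e0) - f (q e0)) / L e0
       + (\<Sum>e\<in>E - {e0}. (?g (p e) - ?g (q e)) * (f (p e) - f (q e)) / L e)"
    by (rule sum.remove[OF finE e0])
  also have "(\<Sum>e\<in>E - {e0}. (?g (p e) - ?g (q e)) * (f (p e) - f (q e)) / L e) = 0"
    using C by (intro sum.neutral) auto
  finally show ?thesis by simp
qed

lemma nc_remove:
  assumes e: "e \<in> E"
  shows "NC f v = net_current (E - {e}) p q L f v
     + (if p e = v then (f v - f (q e)) / L e else 0) + (if q e = v then (f v - f (p e)) / L e else 0)"
proof -
  have fin1: "finite {e'\<in>E. p e' = v}" "finite {e'\<in>E. q e' = v}" using finE by auto
  have s1: "(\<Sum>e'\<in>{e'\<in>E. p e' = v}. (f v - f (q e')) / L e') =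
     (if p e = v then (f v - f (q e)) / L e else 0) + (\<Sum>e'\<in>{e'\<in>E - {e}. p e' = v}. (f v - f (q e')) / L e')"
  proof (cases "p e = v")
    case True
    have "{e'\<in>E - {e}. p e' = v} = {e'\<in>E. p e' = v} - {e}" by auto
    then show ?thesis using True e sum.remove[OF fin1(1), of e] by simp
  next
    case False
    have "{e'\<in>E - {e}. p e' = v} = {e'\<in>E. p e' = v}" using False by auto
    then show ?thesis using False by simp
  qed
  have s2: "(\<Sum>e'\<in>{e'\<in>E. q e' = v}. (f v - f (p e')) / L e') =
     (if q e = v then (f v - f (p e)) / L e else 0) + (\<Sum>e'\<in>{e'\<in>E - {e}. q e' = v}. (f v - f (p e')) / L e')"
  proof (cases "q e = v")
    case True
    have "{e'\<in>E - {e}. q e' = v} = {e'\<in>E. q e' = v} - {e}" by auto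
    then show ?thesis using True e sum.remove[OF fin1(2), of e] by simp
  next
    case False
    have "{e'\<in>E - {e}. q e' = v} = {e'\<in>E. q e' = v}" using False by auto
    then show ?thesis using False by simp
  qed
  show ?thesis unfolding net_current_def s1 s2 by simp
qed

lemma rnet_remove: "rnet V (E - {e}) p q L"
  using finV finE pV qV Lpos by unfold_locales auto

end



locale cnet = rnet +
  assumes conn: "graph_connected V E p q"
begin

lemma harmonic_const:
  assumes h: "\<forall>v\<in>V. NC f v = 0" and u: "u \<in> V" and w: "w \<in> V"
  shows "f u = f w"
proof -
  have "(\<Sum>v\<in>V. f v * NC f v) = 0" using h by simp
  then have "(\<Sum>e\<in>E. (f (p e) - f (q e)) * (f (p e) - f (q e)) / L e) = 0" using green[of f f] by simp
  then have "\<And>e. e \<in> E \<Longrightarrow> f (p e) = f (q e)" by (rule energy_terms_zero)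
  moreover have "connected_in E p q u w" using conn u w by (auto simp: graph_connected_def)
  ultimately show ?thesis by (rule edges_const)
qed

lemma volt_unique:
  assumes z: "z \<in> V" and f: "is_voltage V E p q L z y f" and g: "is_voltage V E p q L z y g"
  shows "f = g"
proof -
  let ?h = "\<lambda>x. f x - g x"
  have "\<forall>v\<in>V. NC ?h v = 0" using f g by (simp add: nc_diff is_voltage_def)
  have "?h u = ?h z" if "u \<in> V" for u using harmonic_const[of ?h u z] that z \<open>\<forall>v\<in>V. NC ?h v = 0\<close> by blast
  show ?thesis
  proof (rule ext)
    fix x show "f x = g x"
    proof (cases "x \<in> V")
      case True then show ?thesis using \<open>\<And>u. u \<in> V \<Longrightarrow> ?h u = ?h z\<close>[OF True] f g
        by (simp add: is_voltage_def)
    next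
      case False then show ?thesis using f g by (simp add: is_voltage_def)
    qed
  qed
qed

lemma volt_exists:
  assumes z: "z \<in> V" and y: "y \<in> V"
  shows "\<exists>f. is_voltage V E p q L z y f"
proof -
  define T where "T f = (\<lambda>v. if v \<in> V then (if v = z then f z else NC f v) else 0)" for f
  define g0 where "g0 = (\<lambda>v. if v \<in> V \<and> v \<noteq> z \<and> v = y then (1::real) else 0)"
  have NCz: "NC f z = - (\<Sum>v\<in>V - {z}. NC f v)" for f
    using nc_sum0[of f] sum.remove[OF finV z, of "NC f"] by simp
  have "\<exists>f. (\<forall>x. x \<notin> V \<longrightarrow> f x = 0) \<and> T f = g0"
  proof (rule fin_surj[OF finV])
    show "T (f + g) = T f + T g" for f g
      by (auto simp: T_def fun_eq_iff plus_fun_def nc_add)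
    show "T (\<lambda>x. c * f x) = (\<lambda>x. c * T f x)" for c f
      by (auto simp: T_def fun_eq_iff nc_scale)
    show "T f x = 0" if "x \<notin> V" for f x using that by (simp add: T_def)
    show "\<forall>x. x \<notin> V \<longrightarrow> g0 x = 0" by (simp add: g0_def)
    show "f = 0" if f0: "\<forall>x. x \<notin> V \<longrightarrow> f x = 0" and Tf: "T f = 0" for f
    proof -
      have a: "NC f v = 0" if "v \<in> V - {z}" for v
        using fun_cong[OF Tf, of v] that by (auto simp: T_def)
      have fz: "f z = 0" using fun_cong[OF Tf, of z] z by (simp add: T_def)
      have "NC f z = 0" using NCz[of f] a by simp
      then have "\<forall>v\<in>V. NC f v = 0" using a by blast
      then have "f u = 0" if "u \<in> V" for u using harmonic_const[of f u z] that z fz by simp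
      then show ?thesis using f0 by (auto simp: fun_eq_iff)
    qed
  qed
  then obtain f where f0: "\<forall>x. x \<notin> V \<longrightarrow> f x = 0" and Tf: "T f = g0" by blast
  have fz: "f z = 0" using fun_cong[OF Tf, of z] z by (simp add: T_def g0_def)
  have a: "NC f v = (if v = y then 1 else 0)" if "v \<in> V - {z}" for v
    using fun_cong[OF Tf, of v] that by (auto simp: T_def g0_def)
  have "NC f z = - (\<Sum>v\<in>V - {z}. (if v = y then 1 else 0))"
    using NCz[of f] a by simp
  also have "\<dots> = (if z = y then 1 else 0) - 1" using finV y by auto
  finally have b: "NC f z = (if z = y then 1 else 0) - 1" .
  have "is_voltage V E p q L z y f"
    unfolding is_voltage_def using f0 fz a b by auto
  then show ?thesis by blast
qed

definition volt where "volt z y = (THE f. is_voltage V E p q L z y f)"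

lemma volt: assumes "z \<in> V" "y \<in> V" shows "is_voltage V E p q L z y (volt z y)"
proof -
  have "\<exists>!f. is_voltage V E p q L z y f"
    using volt_exists[OF assms] volt_unique[OF assms(1)] by blast
  then show ?thesis unfolding volt_def by (rule theI')
qed

lemma jfun_volt: "jfun V E p q L z x y = volt z y x"
  by (simp add: jfun_def volt_def)

lemma volt_z: "z \<in> V \<Longrightarrow> y \<in> V \<Longrightarrow> volt z y z = 0"
  using volt by (simp add: is_voltage_def)

lemma volt_nc: "z \<in> V \<Longrightarrow> y \<in> V \<Longrightarrow> v \<in> V \<Longrightarrow>
    NC (volt z y) v = (if v = y then 1 else 0) - (if v = z then 1 else 0)"
  using volt by (simp add: is_voltage_def)

lemma pair_sum:
  assumes "a \<in> V" "b \<in> V"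
  shows "(\<Sum>v\<in>V. w v * NC (volt a b) v) = w b - w a"
proof -
  have "(\<Sum>v\<in>V. w v * NC (volt a b) v) = (\<Sum>v\<in>V. w v * ((if v = b then 1 else 0) - (if v = a then 1 else 0)))"
    using assms by (intro sum.cong) (auto simp: volt_nc)
  also have "\<dots> = w b - w a" by (rule delta_sum[OF assms])
  finally show ?thesis .
qed

lemma recip:
  assumes "a \<in> V" "b \<in> V" "c \<in> V" "d \<in> V"
  shows "volt c d b - volt c d a = volt a b d - volt a b c"
proof -
  have "volt c d b - volt c d a = (\<Sum>v\<in>V. volt c d v * NC (volt a b) v)"
    using pair_sum assms by simp
  also have "\<dots> = (\<Sum>v\<in>V. volt a b v * NC (volt c d) v)"
    unfolding green by (simp add: mult.commute)
  also have "\<dots> = volt a b d - volt a b c" using pair_sum assms by simp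
  finally show ?thesis .
qed

lemma volt_sym: "z \<in> V \<Longrightarrow> x \<in> V \<Longrightarrow> y \<in> V \<Longrightarrow> volt z y x = volt z x y"
  using recip[of z y z x] volt_z by simp

lemma energy_volt:
  assumes "a \<in> V" "b \<in> V"
  shows "volt a b b - volt a b a =
    (\<Sum>e\<in>E. (volt a b (p e) - volt a b (q e)) * (volt a b (p e) - volt a b (q e)) / L e)"
  using pair_sum[OF assms, of "volt a b"] green by simp

lemma key_recip:
  assumes "s \<in> V" "t \<in> V" "x \<in> V" "y \<in> V"
  shows "(volt t s x - volt t s y)^2 = (volt x s y - volt x t y)^2"
proof -
  have "volt x y s - volt x y t = volt t s y - volt t s x" using recip[of t s x y] assms by simp
  moreover have "volt x s y = volt x y s" "volt x t y = volt x y t" using volt_sym assms by auto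
  ultimately have "volt x s y - volt x t y = volt t s y - volt t s x" by simp
  then show ?thesis by (simp add: power2_commute)
qed

end



theorem theorem3p7:
  fixes V :: "'v set" and E :: "'e set" and p q :: "'e \<Rightarrow> 'v" and L :: "'e \<Rightarrow> real"
    and s t :: 'v
  assumes "metrized_graph V E p q L"
    and "s \<in> V" and "t \<in> V"
  defines "B \<equiv> {e \<in> E. \<not> connected_in (E - {e}) p q s t}"
  shows "resistance V E p q L s t =
           (\<Sum>e\<in>B. L e) +
           (\<Sum>e\<in>{e\<in>E. \<not> is_bridge V E p q e}.
              L e / (L e + resistance V (E - {e}) p q L (p e) (q e))^2 *
              (jfun V (E - {e}) p q L (p e) (q e) s - jfun V (E - {e}) p q L (p e) (q e) t)^2)
       \<and> resistance V E p q L s t =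
           (\<Sum>e\<in>B. L e) +
           (\<Sum>e\<in>{e\<in>E. \<not> is_bridge V E p q e}.
              1 / L e * (jfun V E p q L (p e) (q e) s - jfun V E p q L (p e) (q e) t)^2)"
proof -
  have mg: "finite V" "finite E" "\<And>e. e \<in> E \<Longrightarrow> p e \<in> V" "\<And>e. e \<in> E \<Longrightarrow> q e \<in> V"
    "\<And>e. e \<in> E \<Longrightarrow> 0 < L e" "graph_connected V E p q"
    using assms(1) by (auto simp: metrized_graph_def)
  interpret G: cnet V E p q L
    using mg by unfold_locales auto
  have sV: "s \<in> V" and tV: "t \<in> V" by fact+
  define u where "u = G.volt t s"
  define tm where "tm e = (u (p e) - u (q e)) * (u (p e) - u (q e)) / L e" for e
  define BR where "BR = {e\<in>E. is_bridge V E p q e}"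
  define NB where "NB = {e\<in>E. \<not> is_bridge V E p q e}"
  have res: "resistance V E p q L s t = (\<Sum>e\<in>E. tm e)"
  proof -
    have "resistance V E p q L s t = u s" by (simp add: resistance_def G.jfun_volt u_def)
    also have "\<dots> = u s - u t" using G.volt_z[OF tV sV] by (simp add: u_def)
    also have "\<dots> = (\<Sum>e\<in>E. tm e)" unfolding u_def tm_def by (rule G.energy_volt[OF tV sV])
    finally show ?thesis .
  qed
  have BsubBR: "B \<subseteq> BR"
  proof
    fix e assume eB: "e \<in> B"
    have "is_bridge V E p q e"
    proof (rule ccontr)
      assume "\<not> is_bridge V E p q e"
      then have "graph_connected V (E - {e}) p q" using not_bridge_conn[OF mg(6)] by blast
      then have "connected_in (E - {e}) p q s t" using sV tV by (auto simp: graph_connected_def)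
      then show False using eB by (simp add: B_def)
    qed
    then show "e \<in> BR" using eB by (simp add: B_def BR_def)
  qed
  have cutres: "(u (p e) - u (q e)) / L e =
      (if connected_in (E - {e}) p q (p e) s then 1 else 0) - (if connected_in (E - {e}) p q (p e) t then 1 else 0)"
    if eBR: "e \<in> BR" for e
  proof -
    have e: "e \<in> E" and br: "is_bridge V E p q e" using eBR by (auto simp: BR_def)
    define C where "C = {v\<in>V. connected_in (E - {e}) p q (p e) v}"
    let ?g = "\<lambda>v. if v \<in> C then (1::real) else 0"
    have Cc: "p e' \<in> C \<longleftrightarrow> q e' \<in> C" if "e' \<in> E - {e}" for e'
    proof -
      have pq: "connected_in (E - {e}) p q (p e') (q e')" by (rule conn_edge[OF that])
      have "p e' \<in> V" "q e' \<in> V" using that mg by auto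
      then show ?thesis unfolding C_def using pq conn_sym conn_trans by (metis (no_types, lifting) mem_Collect_eq)
    qed
    have "(\<Sum>v\<in>V. ?g v * G.NC u v) = (?g (p e) - ?g (q e)) * (u (p e) - u (q e)) / L e"
      by (rule G.cut[OF e Cc])
    moreover have "(\<Sum>v\<in>V. ?g v * G.NC u v) = ?g s - ?g t"
      unfolding u_def by (rule G.pair_sum[OF tV sV])
    moreover have "p e \<in> C" using mg e by (simp add: C_def conn_refl)
    moreover have "q e \<notin> C" using bridge_sep[OF mg(6) e _ br] mg e by (simp add: C_def)
    ultimately have "(u (p e) - u (q e)) / L e = ?g s - ?g t" by simp
    then show ?thesis using sV tV by (simp add: C_def)
  qed
  have tmB: "tm e = L e" if eB: "e \<in> B" for e
  proof -
    have eBR: "e \<in> BR" using eB BsubBR by blast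
    have e: "e \<in> E" using eB by (simp add: B_def)
    have nst: "\<not> connected_in (E - {e}) p q s t" using eB by (simp add: B_def)
    have n1: "\<not> (connected_in (E - {e}) p q (p e) s \<and> connected_in (E - {e}) p q (p e) t)"
      using nst conn_sym conn_trans by metis
    have "connected_in E p q (p e) s" "connected_in E p q (p e) t"
      using mg e sV tV by (auto simp: graph_connected_def)
    from conn_split[OF e this(1)] conn_split[OF e this(2)]
    have n2: "connected_in (E - {e}) p q (p e) s \<or> connected_in (E - {e}) p q (p e) t"
      using nst conn_sym conn_trans by metis
    have "(u (p e) - u (q e)) / L e = 1 \<or> (u (p e) - u (q e)) / L e = -1"
      using cutres[OF eBR] n1 n2 by auto
    then have "u (p e) - u (q e) = L e \<or> u (p e) - u (q e) = - L e"
      using mg(5)[OF e] by (auto simp: field_simps)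
    then show ?thesis using mg(5)[OF e] by (auto simp: tm_def)
  qed
  have tmBR: "tm e = 0" if eBR: "e \<in> BR - B" for e
  proof -
    have e: "e \<in> E" using eBR by (simp add: BR_def)
    have st: "connected_in (E - {e}) p q s t" using eBR e by (simp add: B_def)
    have "connected_in (E - {e}) p q (p e) s \<longleftrightarrow> connected_in (E - {e}) p q (p e) t"
      using st conn_sym conn_trans by metis
    then have "(u (p e) - u (q e)) / L e = 0" using cutres eBR by simp
    then show ?thesis by (simp add: tm_def)
  qed
  have tm2: "tm e = 1 / L e * (jfun V E p q L (p e) (q e) s - jfun V E p q L (p e) (q e) t)^2"
    if e: "e \<in> E" for e
  proof -
    have "(u (p e) - u (q e))^2 = (G.volt (p e) s (q e) - G.volt (p e) t (q e))^2"
      unfolding u_def by (rule G.key_recip) (use sV tV mg e in auto)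
    then show ?thesis by (simp add: tm_def G.jfun_volt power2_eq_square)
  qed
  have tm1: "tm e = L e / (L e + resistance V (E - {e}) p q L (p e) (q e))^2 *
              (jfun V (E - {e}) p q L (p e) (q e) s - jfun V (E - {e}) p q L (p e) (q e) t)^2"
    if eNB: "e \<in> NB" for e
  proof -
    have e: "e \<in> E" and nb: "\<not> is_bridge V E p q e" using eNB by (auto simp: NB_def)
    have pe: "p e \<in> V" and qe: "q e \<in> V" and Le: "0 < L e" using mg e by auto
    interpret H: cnet V "E - {e}" p q L
      using G.rnet_remove not_bridge_conn[OF mg(6) nb]
      by (simp add: cnet_def cnet_axioms_def)
    define u' where "u' = H.volt t s"
    define \<psi> where "\<psi> = H.volt (q e) (p e)"
    define R where "R = \<psi> (p e)"
    define I where "I = (u (p e) - u (q e)) / L e"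
    define U where "U = u' (p e) - u' (q e)"
    have Rres: "resistance V (E - {e}) p q L (p e) (q e) = R"
      by (simp add: resistance_def H.jfun_volt R_def \<psi>_def)
    define h where "h = (\<lambda>x. u x - u' x + I * \<psi> x)"
    have hh: "H.NC h v = 0" if v: "v \<in> V" for v
    proof -
      have "H.NC h v = H.NC u v - H.NC u' v + I * H.NC \<psi> v"
        unfolding h_def using H.nc_add[of "\<lambda>x. u x - u' x" "\<lambda>x. I * \<psi> x" v]
        by (simp add: H.nc_diff H.nc_scale)
      also have "H.NC u v = G.NC u v - ((if p e = v then (u v - u (q e)) / L e else 0)
                 + (if q e = v then (u v - u (p e)) / L e else 0))"
        using G.nc_remove[OF e, of u v] by simp
      also have "G.NC u v = (if v = s then 1 else 0) - (if v = t then 1 else 0)"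
        unfolding u_def by (rule G.volt_nc[OF tV sV v])
      also have "H.NC u' v = (if v = s then 1 else 0) - (if v = t then 1 else 0)"
        unfolding u'_def by (rule H.volt_nc[OF tV sV v])
      also have "H.NC \<psi> v = (if v = p e then 1 else 0) - (if v = q e then 1 else 0)"
        unfolding \<psi>_def by (rule H.volt_nc[OF qe pe v])
      finally show ?thesis using Le
        by (cases "v = p e"; cases "v = q e") (auto simp: I_def field_simps)
    qed
    have "h (p e) = h (q e)" using H.harmonic_const[of h "p e" "q e"] hh pe qe by blast
    moreover have "\<psi> (q e) = 0" unfolding \<psi>_def by (rule H.volt_z[OF qe pe])
    ultimately have eq1: "u (p e) - u (q e) = U - I * R"
      by (simp add: h_def U_def R_def algebra_simps)
    have IL: "u (p e) - u (q e) = I * L e" using Le by (simp add: I_def)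
    have "R = \<psi> (p e) - \<psi> (q e)" using \<open>\<psi> (q e) = 0\<close> by (simp add: R_def)
    also have "\<dots> = (\<Sum>e'\<in>E - {e}. (\<psi> (p e') - \<psi> (q e')) * (\<psi> (p e') - \<psi> (q e')) / L e')"
      unfolding \<psi>_def by (rule H.energy_volt[OF qe pe])
    finally have R0: "0 \<le> R" using H.energy_nonneg by simp
    have LR: "0 < L e + R" using Le R0 by simp
    have I_eq: "I = U / (L e + R)" using eq1 IL LR by (simp add: field_simps)
    have "tm e = I^2 * L e" unfolding tm_def IL using Le by (simp add: power2_eq_square)
    also have "\<dots> = L e / (L e + R)^2 * U^2" unfolding I_eq by (simp add: power_divide)
    also have "U^2 = (H.volt (p e) s (q e) - H.volt (p e) t (q e))^2"
      unfolding U_def u'_def by (rule H.key_recip) (use sV tV pe qe in auto)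
    finally show ?thesis by (simp add: Rres H.jfun_volt)
  qed
  have EU: "E = BR \<union> NB" and disj: "BR \<inter> NB = {}" by (auto simp: BR_def NB_def)
  have finBR: "finite BR" and finNB: "finite NB" using mg(2) by (auto simp: BR_def NB_def)
  have "(\<Sum>e\<in>E. tm e) = (\<Sum>e\<in>BR. tm e) + (\<Sum>e\<in>NB. tm e)"
    unfolding EU by (rule sum.union_disjoint[OF finBR finNB disj])
  also have "(\<Sum>e\<in>BR. tm e) = (\<Sum>e\<in>BR - B. tm e) + (\<Sum>e\<in>B. tm e)"
    by (rule sum.subset_diff[OF BsubBR finBR])
  also have "(\<Sum>e\<in>BR - B. tm e) = 0" using tmBR by simp
  also have "(\<Sum>e\<in>B. tm e) = (\<Sum>e\<in>B. L e)" using tmB by simp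
  finally have main: "resistance V E p q L s t = (\<Sum>e\<in>B. L e) + (\<Sum>e\<in>NB. tm e)"
    using res by simp
  have s1: "(\<Sum>e\<in>NB. tm e) = (\<Sum>e\<in>NB. L e / (L e + resistance V (E - {e}) p q L (p e) (q e))^2 *
              (jfun V (E - {e}) p q L (p e) (q e) s - jfun V (E - {e}) p q L (p e) (q e) t)^2)"
    using tm1 by (rule sum.cong[OF refl])
  have s2: "(\<Sum>e\<in>NB. tm e) = (\<Sum>e\<in>NB. 1 / L e * (jfun V E p q L (p e) (q e) s - jfun V E p q L (p e) (q e) t)^2)"
    using tm2 by (intro sum.cong) (auto simp: NB_def)
  show ?thesis using main s1 s2 unfolding NB_def by simp
qed


end
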